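(* Let $p$ be a prime and $t\in\mathbb Z/(p)$ nonzero. Let $j_0,\dots,j_{p-1}\in\mathbb Z/(p)$ (indices read in $\mathbb Z/(p)$) satisfy $j_i=j_{-i}$ and $j_{t^s i}=t^s j_i-(t^s-1)j_0$ for all $i\in\mathbb Z/(p)$ and $s\in\mathbb Z$, and suppose $j_i\ne j_k$ for some $i\ne k$. Define $\sigma_{(i,j)}(k,l)=(tk+j,\ t(l-j_{tk+j-i}))$ on $(\mathbb Z/(p))^2$ and $r((i,j),(k,l))=(\sigma_{(i,j)}(k,l),\sigma^{-1}_{\sigma_{(i,j)}(k,l)}(i,j))$. Then $((\mathbb Z/(p))^2,r)$ is a simple solution of the YBE.
   Context: A solution of the YBE is a pair $(X,r)$, $X$ nonempty, $r:X\times X\to X\times X$, $r(x,y)=(\sigma_x(y),\gamma_y(x))$, with $r^2=\mathrm{id}$, all $\sigma_x,\gamma_x$ bijective, and $r_{12}r_{23}r_{12}=r_{23}r_{12}r_{23}$ on $X^3$. A homomorphism of solutions $f:(X,r)\to(Y,s)$ (with $s(t,z)=(\sigma'_t(z),\gamma'_z(t))$) is a map with $f(\sigma_x(y))=\sigma'_{f(x)}(f(y))$; $(X,r)$ is simple if $|X|>1$ and every surjective homomorphism of solutions $f:(X,r)\to(Y,s)$ is bijective or has $|Y|=1$. *)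

theory Defs
  imports Main "Berlekamp_Zassenhaus.Finite_Field"
begin

definition ybe_sigma :: "('a \<times> 'a \<Rightarrow> 'a \<times> 'a) \<Rightarrow> 'a \<Rightarrow> 'a \<Rightarrow> 'a" where
  "ybe_sigma r x y = fst (r (x, y))"

definition ybe_gamma :: "('a \<times> 'a \<Rightarrow> 'a \<times> 'a) \<Rightarrow> 'a \<Rightarrow> 'a \<Rightarrow> 'a" where
  "ybe_gamma r y x = snd (r (x, y))"

definition ybe_solution :: "'a set \<Rightarrow> ('a \<times> 'a \<Rightarrow> 'a \<times> 'a) \<Rightarrow> bool" where
  "ybe_solution X r \<longleftrightarrow>
     X \<noteq> {} \<and>
     (\<forall>x\<in>X. \<forall>y\<in>X. r (x, y) \<in> X \<times> X) \<and>
     (\<forall>x\<in>X. \<forall>y\<in>X. r (r (x, y)) = (x, y)) \<and>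
     (\<forall>x\<in>X. bij_betw (ybe_sigma r x) X X) \<and>
     (\<forall>y\<in>X. bij_betw (ybe_gamma r y) X X) \<and>
     (\<forall>x\<in>X. \<forall>y\<in>X. \<forall>z\<in>X.
        (let r12 = (\<lambda>(a, b, c). (fst (r (a, b)), snd (r (a, b)), c));
             r23 = (\<lambda>(a, b, c). (a, fst (r (b, c)), snd (r (b, c))))
         in r12 (r23 (r12 (x, y, z))) = r23 (r12 (r23 (x, y, z)))))"

definition ybe_hom :: "'a set \<Rightarrow> ('a \<times> 'a \<Rightarrow> 'a \<times> 'a) \<Rightarrow> 'b set \<Rightarrow> ('b \<times> 'b \<Rightarrow> 'b \<times> 'b)
    \<Rightarrow> ('a \<Rightarrow> 'b) \<Rightarrow> bool" where
  "ybe_hom X r Y s f \<longleftrightarrow>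
     (\<forall>x\<in>X. f x \<in> Y) \<and>
     (\<forall>x\<in>X. \<forall>y\<in>X. f (ybe_sigma r x y) = ybe_sigma s (f x) (f y))"

text \<open>The target solutions (Y, s) range over subsets of an arbitrary
  type 'b, passed as TYPE('b); a statement with a free 'b is universally
  quantified over all types, i.e. over all possible targets.\<close>
definition ybe_simple :: "'b itself \<Rightarrow> 'a set \<Rightarrow> ('a \<times> 'a \<Rightarrow> 'a \<times> 'a) \<Rightarrow> bool" where
  "ybe_simple (_ :: 'b itself) X r \<longleftrightarrow>
     ybe_solution X r \<and> (\<exists>x\<in>X. \<exists>y\<in>X. x \<noteq> y) \<and>
     (\<forall>(Y :: 'b set) s f. ybe_solution Y s \<and> ybe_hom X r Y s f \<and> f ` X = Y
        \<longrightarrow> bij_betw f X Y \<or> (\<exists>y. Y = {y}))"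

end

theory Submission
  imports Defs
begin

locale yb =
  fixes t :: "'a::field"
    and J :: "'a \<Rightarrow> 'a"
    and sig :: "'a \<times> 'a \<Rightarrow> 'a \<times> 'a \<Rightarrow> 'a \<times> 'a"
    and r :: "('a \<times> 'a) \<times> ('a \<times> 'a) \<Rightarrow> ('a \<times> 'a) \<times> ('a \<times> 'a)"
  assumes t0: "t \<noteq> 0"
    and Jev: "J (- z) = J z"
    and Jt: "J (t * w) = t * J w - (t - 1) * J 0"
    and nc: "\<exists>i k. i \<noteq> k \<and> J i \<noteq> J k"
    and sigE: "sig (i, j) (k, l) = (t * k + j, t * (l - J (t * k + j - i)))"
    and rE: "r (xx, yy) = (sig xx yy, inv_into UNIV (sig (sig xx yy)) xx)"
    and ofnat_all: "(ee::'a) \<noteq> 0 \<Longrightarrow> \<exists>n. zz = of_nat n * ee"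
    and char2: "(2::'a) = 0 \<Longrightarrow> (zz::'a) \<noteq> 0 \<Longrightarrow> zz = 1"
begin

lemma sig_inj: "inj (sig x)"
proof (rule injI)
  fix y z assume h: "sig x y = sig x z"
  obtain i j where x: "x = (i,j)" by force
  obtain k l where y: "y = (k,l)" by force
  obtain k' l' where z: "z = (k',l')" by force
  from h have 1: "t * k + j = t * k' + j" and 2: "t * (l - J (t * k + j - i)) = t * (l' - J (t * k' + j - i))"
    by (simp_all add: x y z sigE)
  from 1 t0 have kk: "k = k'" by simp
  from 2 have "t * (l - J (t * k + j - i)) = t * (l' - J (t * k + j - i))" by (simp only: kk)
  with t0 have "l = l'" by simp
  with kk show "y = z" by (simp add: y z)
qed

lemma Rm: assumes "m = t * k + j - i"
  shows "r ((i,j),(k,l)) = ((t * k + j, t * (l - J m)), (i / t - l + J m, j / t + J m))"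
proof -
  have s: "sig (i,j) (k,l) = (t * k + j, t * (l - J m))" unfolding sigE assms ..
  have a: "t * (i / t - l + J m) + t * (l - J m) - (t * k + j) = - m"
    using t0 unfolding assms by (simp add: field_simps)
  have "sig (t * k + j, t * (l - J m)) (i / t - l + J m, j / t + J m)
      = (t * (i / t - l + J m) + t * (l - J m), t * (j / t + J m - J (- m)))"
    unfolding sigE a ..
  also have "\<dots> = (i, j)" unfolding Jev using t0 by (simp add: field_simps)
  finally have eq: "sig (t * k + j, t * (l - J m)) (i / t - l + J m, j / t + J m) = (i, j)" .
  have "inv_into UNIV (sig (t * k + j, t * (l - J m))) (i,j) = (i / t - l + J m, j / t + J m)"
    by (rule inv_into_f_eq[OF sig_inj UNIV_I eq])
  then show ?thesis unfolding rE s by simp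
qed

lemma invol: "r (r (x, y)) = (x, y)"
proof -
  obtain i j where x: "x = (i,j)" by force
  obtain k l where y: "y = (k,l)" by force
  define m where "m = t * k + j - i"
  define c where "c = J m"
  have Jm: "J (- m) = c" by (simp add: Jev c_def)
  have "r (r (x,y)) = r ((t * k + j, t * (l - c)), (i / t - l + c, j / t + c))"
    by (simp add: x y Rm m_def c_def)
  also have "\<dots> = ((t * (i / t - l + c) + t * (l - c), t * (j / t + c - J (- m))),
      ((t * k + j) / t - (j / t + c) + J (- m), t * (l - c) / t + J (- m)))"
    by (rule Rm) (use t0 in \<open>simp add: m_def field_simps\<close>)
  also have "\<dots> = (x, y)" using t0 Jm by (simp add: x y field_simps)
  finally show ?thesis .
qed

lemma sig_bij: "bij (sig x)"
proof -
  obtain i j where x: "x = (i,j)" by force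
  have "surj (sig x)"
  proof
    show "UNIV \<subseteq> range (sig x)"
    proof
      fix y :: "'a \<times> 'a"
      obtain a b where y: "y = (a,b)" by force
      define c where "c = J (a - i)"
      have e: "t * ((a - j) / t) + j - i = a - i" using t0 by (simp add: field_simps)
      have "sig x ((a - j) / t, b / t + c) = (t * ((a - j) / t) + j, t * (b / t + c - J (a - i)))"
        by (simp only: x sigE e)
      also have "\<dots> = y" using t0 by (simp add: y c_def field_simps)
      finally show "y \<in> range (sig x)" by (metis rangeI)
    qed
  qed simp
  then show ?thesis using sig_inj by (simp add: bij_def)
qed

lemma gam_bij: "bij (\<lambda>x. snd (r (x, y)))"
proof -
  obtain k l where y: "y = (k,l)" by force
  define g where "g = (\<lambda>(u,v). let m = t * (k - u + v - l) in (t * (u + l - J m), t * (v - J m)))"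
  have 1: "g (snd (r (x, y))) = x" for x
  proof -
    obtain i j where x: "x = (i,j)" by force
    define m where "m = t * k + j - i"
    define c where "c = J m"
    have "g (snd (r (x, y))) = g (i / t - l + c, j / t + c)" by (simp add: x y Rm m_def c_def)
    also have e: "t * (k - (i / t - l + c) + (j / t + c) - l) = m"
      using t0 by (simp add: m_def field_simps)
    then have "g (i / t - l + c, j / t + c) = (t * (i / t - l + c + l - c), t * (j / t + c - c))"
      by (simp add: g_def Let_def c_def)
    also have "\<dots> = x" using t0 by (simp add: x field_simps)
    finally show ?thesis .
  qed
  have 2: "snd (r (g z, y)) = z" for z
  proof -
    obtain u v where z: "z = (u,v)" by force
    define m where "m = t * (k - u + v - l)"
    define c where "c = J m"
    have gz: "g z = (t * (u + l - c), t * (v - c))" by (simp add: g_def z m_def c_def Let_def)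
    have "r (g z, y) = ((t * k + t * (v - c), t * (l - J m)),
       (t * (u + l - c) / t - l + J m, t * (v - c) / t + J m))"
      unfolding gz y by (rule Rm) (simp add: m_def field_simps)
    then show ?thesis using t0 by (simp add: z c_def[symmetric] field_simps)
  qed
  show ?thesis by (rule o_bij[of g]) (auto simp: 1 2 fun_eq_iff)
qed

lemma ybe: "(let r12 = (\<lambda>(a, b, c). (fst (r (a, b)), snd (r (a, b)), c));
             r23 = (\<lambda>(a, b, c). (a, fst (r (b, c)), snd (r (b, c))))
         in r12 (r23 (r12 (x, y, z))) = r23 (r12 (r23 (x, y, z))))"
proof -
  obtain x1 x2 where x: "x = (x1,x2)" by force
  obtain y1 y2 where y: "y = (y1,y2)" by force
  obtain z1 z2 where z: "z = (z1,z2)" by force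
  define m where "m = t * z1 + y2"
  define d where "d = (x2 - x1) / t"
  define c1 where "c1 = J (t * (y1 + d))"
  define A where "A = J (y1 + d)"
  define B where "B = J (m + d)"
  define C where "C = J (m - y1)"
  define Bp where "Bp = J (t * (m + d))"
  define Cp where "Cp = J (t * (m - y1))"
  define Z where "Z = J 0"
  have e1: "r ((x1,x2),(y1,y2)) = ((t*y1+x2, t*(y2 - c1)), (x1/t - y2 + c1, x2/t + c1))"
    unfolding c1_def by (rule Rm) (use t0 in \<open>simp add: d_def field_simps\<close>)
  have e2: "r ((x1/t - y2 + c1, x2/t + c1),(z1,z2)) = ((t*z1 + (x2/t+c1), t*(z2 - B)),
     ((x1/t - y2 + c1)/t - z2 + B, (x2/t+c1)/t + B))"
    unfolding B_def by (rule Rm) (use t0 in \<open>simp add: m_def d_def field_simps\<close>)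
  have e3: "r ((t*y1+x2, t*(y2 - c1)), (t*z1 + (x2/t+c1), t*(z2 - B))) =
     ((t*(t*z1 + (x2/t+c1)) + t*(y2-c1), t*(t*(z2 - B) - Cp)),
      ((t*y1+x2)/t - t*(z2 - B) + Cp, t*(y2-c1)/t + Cp))"
    unfolding Cp_def by (rule Rm) (use t0 in \<open>simp add: m_def d_def field_simps\<close>)
  have f1: "r ((y1,y2),(z1,z2)) = ((t*z1+y2, t*(z2 - C)), (y1/t - z2 + C, y2/t + C))"
    unfolding C_def by (rule Rm) (simp add: m_def)
  have f2: "r ((x1,x2),(t*z1+y2, t*(z2 - C))) = ((t*(t*z1+y2)+x2, t*(t*(z2 - C) - Bp)),
     (x1/t - t*(z2 - C) + Bp, x2/t + Bp))"
    unfolding Bp_def by (rule Rm) (use t0 in \<open>simp add: m_def d_def field_simps\<close>)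
  have f3: "r ((x1/t - t*(z2 - C) + Bp, x2/t + Bp), (y1/t - z2 + C, y2/t + C))
     = ((t*(y1/t - z2 + C) + (x2/t + Bp), t*(y2/t + C - A)),
        ((x1/t - t*(z2 - C) + Bp)/t - (y2/t + C) + A, (x2/t + Bp)/t + A))"
    unfolding A_def by (rule Rm) (use t0 in \<open>simp add: m_def d_def field_simps\<close>)
  have j1: "c1 = t * A - (t - 1) * Z" unfolding c1_def A_def Z_def by (rule Jt)
  have j2: "Cp = t * C - (t - 1) * Z" unfolding Cp_def C_def Z_def by (rule Jt)
  have j3: "Bp = t * B - (t - 1) * Z" unfolding Bp_def B_def Z_def by (rule Jt)
  show ?thesis
    unfolding x y z Let_def
    apply (simp only: prod.case e1 e2 e3 f1 f2 f3 fst_conv snd_conv)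
    apply (simp only: j1 j2 j3 prod_eq_iff fst_conv snd_conv)
    apply (intro conjI)
    using t0 by (simp_all add: field_simps m_def d_def)
qed

lemma solution: "ybe_solution UNIV r"
  unfolding ybe_solution_def ybe_sigma_def ybe_gamma_def
proof (intro conjI ballI)
  fix x y :: "'a \<times> 'a" show "r (r (x, y)) = (x, y)" by (rule invol)
next
  fix x :: "'a \<times> 'a"
  have "(\<lambda>y. fst (r (x, y))) = sig x" by (simp add: rE fun_eq_iff)
  then show "bij_betw (\<lambda>y. fst (r (x, y))) UNIV UNIV" using sig_bij by simp
next
  fix y :: "'a \<times> 'a"
  show "bij_betw (\<lambda>x. snd (r (x, y))) UNIV UNIV" using gam_bij by simp
next
  fix x y z :: "'a \<times> 'a"
  show "let r12 = (\<lambda>(a, b, c). (fst (r (a, b)), snd (r (a, b)), c));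
             r23 = (\<lambda>(a, b, c). (a, fst (r (b, c)), snd (r (b, c))))
         in r12 (r23 (r12 (x, y, z))) = r23 (r12 (r23 (x, y, z)))" by (rule ybe)
qed auto


lemma nonper: assumes "\<delta> \<noteq> 0" shows "\<exists>a. J a \<noteq> J (a + \<delta>)"
proof (rule ccontr)
  assume "\<not> (\<exists>a. J a \<noteq> J (a + \<delta>))"
  then have h: "J a = J (a + \<delta>)" for a by blast
  have n: "J (of_nat n * \<delta>) = J 0" for n
  proof (induction n)
    case 0 then show ?case by simp
  next
    case (Suc n)
    have "of_nat (Suc n) * \<delta> = of_nat n * \<delta> + \<delta>" by (simp add: algebra_simps)
    then have "J (of_nat (Suc n) * \<delta>) = J (of_nat n * \<delta> + \<delta>)" by (simp only:)
    also have "\<dots> = J (of_nat n * \<delta>)" by (rule h[symmetric])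
    finally have "J (of_nat (Suc n) * \<delta>) = J (of_nat n * \<delta>)" .
    then show ?case using Suc by simp
  qed
  have "J x = J 0" for x
  proof -
    obtain n where "x = of_nat n * \<delta>" using ofnat_all assms by blast
    then show ?thesis using n by simp
  qed
  then have ji: "J x = J 0" for x .
  obtain i k where "J i \<noteq> J k" using nc by blast
  moreover have "J i = J k" unfolding ji[of i] ji[of k] ..
  ultimately show False by contradiction
qed


context
  fixes f :: "'a \<times> 'a \<Rightarrow> 'b"
  assumes cong: "\<And>x x' y y'. f x = f x' \<Longrightarrow> f y = f y' \<Longrightarrow> f (sig x y) = f (sig x' y')"
begin

lemma fill: assumes e: "e \<noteq> 0" and h: "\<And>b. f (a,b) = f (a, b + e)"
  shows "f (a,b) = f (a,b')"
proof -
  have n: "f (a, b + of_nat n * e) = f (a,b)" for n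
  proof (induction n)
    case 0 then show ?case by simp
  next
    case (Suc n)
    have "b + of_nat (Suc n) * e = (b + of_nat n * e) + e" by (simp add: algebra_simps)
    then have "f (a, b + of_nat (Suc n) * e) = f (a, (b + of_nat n * e) + e)" by (simp only:)
    also have "\<dots> = f (a, b + of_nat n * e)" by (rule h[symmetric])
    also have "\<dots> = f (a, b)" by (rule Suc)
    finally show ?case .
  qed
  obtain n where "b' - b = of_nat n * e" using ofnat_all e by blast
  then have "b' = b + of_nat n * e" by (simp add: algebra_simps)
  then show ?thesis using n by simp
qed

lemma B0: assumes h: "f (i,j) = f (i',j')"
  shows "f (a,b) = f (a + (j'-j), b + t*(J(a-i) - J(a+(j'-j)-i')))"
proof -
  define k where "k = (a - j) / t"
  define l where "l = b / t + J (a - i)"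
  have e1: "t * k + j - i = a - i" and e1': "t * k + j = a" using t0 by (simp_all add: k_def field_simps)
  have e2: "t * k + j' - i' = a + (j'-j) - i'" and e2': "t * k + j' = a + (j' - j)"
    using t0 by (simp_all add: k_def field_simps)
  define c where "c = J (a - i)"
  define c' where "c' = J (a + (j'-j) - i')"
  have l2: "l = b / t + c" by (simp add: l_def c_def)
  have "sig (i,j) (k,l) = (a, t * (l - c))" by (simp only: sigE e1 e1' c_def)
  also have "\<dots> = (a,b)" using t0 by (simp add: l2 field_simps)
  finally have s1: "sig (i,j) (k,l) = (a,b)" .
  have "sig (i',j') (k,l) = (a + (j'-j), t * (l - c'))" by (simp only: sigE e2 e2' c'_def)
  also have "\<dots> = (a + (j'-j), b + t*(c - c'))"
    using t0 by (simp add: l2 field_simps)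
  finally have s2: "sig (i',j') (k,l) = (a + (j'-j), b + t*(J(a-i) - J(a+(j'-j)-i')))" by (simp only: c_def c'_def)
  have "f (sig (i,j) (k,l)) = f (sig (i',j') (k,l))" by (rule cong[OF h refl])
  then show ?thesis by (simp only: s1 s2)
qed

lemma colAll: assumes h: "\<And>b b'. f (a,b) = f (a,b')" shows "f (c,l1) = f (c,l2)"
proof -
  have s: "sig (0, c - t * a) (a, l / t + J c) = (c, l)" for l
  proof -
    have e: "t * a + (c - t * a) - 0 = c" "t * a + (c - t * a) = c" by simp_all
    have "sig (0, c - t * a) (a, l / t + J c) = (c, t * (l / t + J c - J c))" by (simp only: sigE e diff_zero)
    then show ?thesis using t0 by simp
  qed
  have "f (sig (0, c - t * a) (a, l1 / t + J c)) = f (sig (0, c - t * a) (a, l2 / t + J c))"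
    by (rule cong[OF refl h])
  then show ?thesis by (simp only: s)
qed

lemma total: assumes h: "\<And>c l1 l2. f (c,l1) = f (c,l2)" shows "f u = f v"
proof -
  obtain c l where u: "u = (c,l)" by force
  obtain c' l' where v: "v = (c',l')" by force
  have "f (sig (0,c) (0,0)) = f (sig (0,c') (0,0))" by (rule cong[OF h refl])
  then have "f (c, t * (0 - J c)) = f (c', t * (0 - J c'))" by (simp add: sigE)
  then show ?thesis using h u v by metis
qed

lemma caseA: assumes h: "f (i,j) = f (i',j)" and ii: "i \<noteq> i'" shows "f u = f v"
proof -
  obtain a0 where a0: "J a0 \<noteq> J (a0 + (i - i'))" using nonper ii by force
  define a where "a = a0 + i"
  have "J (a - i) \<noteq> J (a - i')" using a0 by (simp add: a_def algebra_simps)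
  then have e: "t * (J (a - i) - J (a + (j - j) - i')) \<noteq> 0" using t0 by simp
  have "f (a,b) = f (a, b + t * (J (a - i) - J (a + (j - j) - i')))" for b
    using B0[OF h, of a b] by simp
  then have col: "f (a,b) = f (a,b')" for b b' using fill[OF e] by blast
  have "f (c,l1) = f (c,l2)" for c l1 l2 by (rule colAll[OF col])
  then show ?thesis by (rule total)
qed

lemma caseB: assumes h: "f (i,j) = f (i',j')" and jj: "j \<noteq> j'" and J: "J (a - i) = J (a + (j'-j) - i')"
  shows "f u = f v"
proof -
  have "f (a,0) = f (a + (j'-j), 0)" using B0[OF h, of a 0] J by simp
  moreover have "a \<noteq> a + (j' - j)" using jj by simp
  ultimately show ?thesis by (rule caseA)
qed

lemma caseB2: assumes h: "f (i,j) = f (i',j')" and jj: "j \<noteq> j'" and ii: "i \<noteq> i'"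
  and two: "(2::'a) = 0"
  shows "f u = f v"
proof -
  have "j' - j \<noteq> 0" using jj by simp
  then have 1: "j' - j = 1" by (rule char2[OF two])
  have "i' - i \<noteq> 0" using ii by simp
  then have 2: "i' - i = 1" by (rule char2[OF two])
  from 1 2 have "j' - j = i' - i" by (simp only:)
  then have "0 + (j' - j) - i' = 0 - i" by (simp add: algebra_simps)
  then have "J (0 - i) = J (0 + (j' - j) - i')" by (simp only:)
  then show ?thesis by (rule caseB[OF h jj])
qed

lemma simple_main: assumes h: "f x = f x'" and xx: "x \<noteq> x'" shows "f u = f v"
proof -
  obtain i j where x: "x = (i,j)" by force
  obtain i' j' where x': "x' = (i',j')" by force
  have h': "f (i,j) = f (i',j')" using h x x' by simp
  show ?thesis
  proof (cases "j = j'")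
    case True
    then have ii: "i \<noteq> i'" using xx x x' by simp
    have "f (i,j) = f (i',j)" using h' True by simp
    then show ?thesis using ii by (rule caseA)
  next
    case jj: False
    show ?thesis
    proof (cases "(2::'a) = 0")
      case False
      define a where "a = (i + i' - (j' - j)) / 2"
      have "a + (j' - j) - i' = - (a - i)" using False by (simp add: a_def field_simps)
      then have "J (a + (j'-j) - i') = J (- (a - i))" by (simp only:)
      then have "J (a - i) = J (a + (j'-j) - i')" by (simp only: Jev)
      then show ?thesis by (rule caseB[OF h' jj])
    next
      case two: True
      show ?thesis
      proof (cases "i = i'")
        case False
        then show ?thesis by (rule caseB2[OF h' jj _ two])
      next
        case True
        define e where "e = t*(J(0-i) - J(0+(j'-j)-i'))"
        have h2: "f (0,0) = f (0 + (j'-j), 0 + e)"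
          unfolding e_def by (rule B0[OF h'])
        show ?thesis
        proof (cases "e = 0")
          case True
          have "f (0,0) = f (j'-j, 0)" using h2 True by simp
          moreover have "(0::'a) \<noteq> j' - j" using jj by simp
          ultimately show ?thesis by (rule caseA)
        next
          case False
          have "f (0,0) = f (j'-j, e)" using h2 by simp
          moreover have "(0::'a) \<noteq> e" using False by simp
          moreover have "(0::'a) \<noteq> j' - j" using jj by simp
          ultimately show ?thesis using two by (rule caseB2)
        qed
      qed
    qed
  qed
qed

end

lemma simple: "ybe_simple TYPE('b) (UNIV :: ('a \<times> 'a) set) r"
proof -
  have "((0::'a), (0::'a)) \<noteq> (1, 0)" by simp
  then have 2: "\<exists>x\<in>(UNIV::('a\<times>'a) set). \<exists>y\<in>UNIV. x \<noteq> y" by blast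
  have 3: "\<forall>(Y :: 'b set) s f. ybe_solution Y s \<and> ybe_hom UNIV r Y s f \<and> f ` UNIV = Y
        \<longrightarrow> bij_betw f UNIV Y \<or> (\<exists>y. Y = {y})"
  proof (intro allI impI)
    fix Y :: "'b set" and s f
    assume a: "ybe_solution Y s \<and> ybe_hom UNIV r Y s f \<and> f ` UNIV = Y"
    then have hd: "\<forall>x\<in>UNIV. \<forall>y\<in>UNIV. f (ybe_sigma r x y) = ybe_sigma s (f x) (f y)"
      unfolding ybe_hom_def by blast
    have rs: "ybe_sigma r x y = sig x y" for x y unfolding ybe_sigma_def rE by simp
    have hom: "f (sig x y) = ybe_sigma s (f x) (f y)" for x y
      using hd[unfolded rs] by blast
    have cg: "f (sig x y) = f (sig x' y')" if "f x = f x'" "f y = f y'" for x x' y y'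
      unfolding hom that ..
    have im: "f ` UNIV = Y" using a by blast
    show "bij_betw f UNIV Y \<or> (\<exists>y. Y = {y})"
    proof (cases "inj f")
      case True
      then have "bij_betw f UNIV Y" unfolding bij_betw_def using im by blast
      then show ?thesis ..
    next
      case False
      then obtain x x' where xx: "f x = f x'" "x \<noteq> x'" unfolding inj_def by blast
      have fu: "f u = f (0,0)" for u by (rule simple_main[OF cg xx])
      have "f ` UNIV = {f (0,0)}"
      proof
        show "f ` UNIV \<subseteq> {f (0, 0)}" using fu by auto
        show "{f (0, 0)} \<subseteq> f ` UNIV" by auto
      qed
      then have "Y = {f (0,0)}" using im by simp
      then show ?thesis by blast
    qed
  qed
  show ?thesis unfolding ybe_simple_def by (intro conjI solution 2 3)
qed

end
lemma field_div_mult: "(e::'a::field) \<noteq> 0 \<Longrightarrow> x = x / e * e" by simp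

lemma mod_ring_ofnat_all:
  assumes e: "(e :: 'p::prime_card mod_ring) \<noteq> 0" shows "\<exists>n. x = of_nat n * e"
proof -
  obtain n where n: "x / e = of_nat n" using surj_of_nat_mod_ring by blast
  have "x = x / e * e" by (rule field_div_mult[OF e])
  also have "\<dots> = of_nat n * e" by (simp only: n)
  finally show ?thesis by blast
qed

lemma mod_ring_char2:
  assumes two: "(2 :: 'p::prime_card mod_ring) = 0" and x: "(x :: 'p mod_ring) \<noteq> 0" shows "x = 1"
proof -
  have "of_nat 2 = (2 :: 'p mod_ring)" by (rule of_nat_numeral)
  then have "of_nat 2 = (0 :: 'p mod_ring)" using two by (simp only:)
  then have d: "CARD('p) dvd 2" by (rule of_nat_0_mod_ring_dvd)
  have g: "CARD('p) > 1" using prime_card prime_gt_1_nat by blast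
  have "CARD('p) \<le> 2" using d by (rule dvd_imp_le) simp
  with g have c: "CARD('p) = 2" by linarith
  obtain i where i: "i < CARD('p)" "x = of_nat i" using surj_of_nat_mod_ring by blast
  then have "i = 0 \<or> i = 1" using c by linarith
  moreover have "i \<noteq> 0"
  proof
    assume "i = 0"
    then have "x = of_nat 0" using i(2) by (simp only:)
    then have "x = 0" by (simp only: of_nat_0)
    with x show False by contradiction
  qed
  ultimately have "i = 1" by blast
  then have "x = of_nat 1" using i(2) by (simp only:)
  then show ?thesis by (simp only: of_nat_1)
qed

theorem mainTheorem10:
  fixes t :: "'p::prime_card mod_ring"
    and J :: "'p mod_ring \<Rightarrow> 'p mod_ring"
    and sig :: "'p mod_ring \<times> 'p mod_ring \<Rightarrow> 'p mod_ring \<times> 'p mod_ring \<Rightarrow> 'p mod_ring \<times> 'p mod_ring"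
    and r :: "('p mod_ring \<times> 'p mod_ring) \<times> ('p mod_ring \<times> 'p mod_ring)
              \<Rightarrow> ('p mod_ring \<times> 'p mod_ring) \<times> ('p mod_ring \<times> 'p mod_ring)"
  assumes "t \<noteq> 0"
    and "\<forall>i. J i = J (- i)"
    and "\<forall>i. \<forall>s::int. J (t powi s * i) = t powi s * J i - (t powi s - 1) * J 0"
    and "\<exists>i k. i \<noteq> k \<and> J i \<noteq> J k"
    and "\<forall>i j k l. sig (i, j) (k, l) = (t * k + j, t * (l - J (t * k + j - i)))"
    and "\<forall>x y. r (x, y) = (sig x y, inv_into UNIV (sig (sig x y)) x)"
  shows "ybe_simple TYPE('b) (UNIV :: ('p mod_ring \<times> 'p mod_ring) set) r"
proof -
  have "yb t J sig r"
  proof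
    show "t \<noteq> 0" by (rule assms(1))
    show "J (- z) = J z" for z using assms(2) by metis
    show "J (t * w) = t * J w - (t - 1) * J 0" for w
    proof -
      have "J (t powi 1 * w) = t powi 1 * J w - (t powi 1 - 1) * J 0" using assms(3) by blast
      then show ?thesis by (simp only: power_int_1_right)
    qed
    show "\<exists>i k. i \<noteq> k \<and> J i \<noteq> J k" by (rule assms(4))
    show "sig (i, j) (k, l) = (t * k + j, t * (l - J (t * k + j - i)))" for i j k l
      using assms(5) by blast
    show "r (xx, yy) = (sig xx yy, inv_into UNIV (sig (sig xx yy)) xx)" for xx yy
      using assms(6) by blast
    show "\<exists>n. zz = of_nat n * ee" if "ee \<noteq> 0" for ee zz :: "'p mod_ring"
      by (rule mod_ring_ofnat_all[OF that])
    show "zz = 1" if "(2::'p mod_ring) = 0" "zz \<noteq> 0" for zz :: "'p mod_ring"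
      by (rule mod_ring_char2[OF that])
  qed
  then show ?thesis by (rule yb.simple)
qed

end
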